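(* Let $s_1,\dots,s_n\in\mathbb R^2$ satisfy $\|s_i-s_j\|\ge h$ for all $i\ne j$, for a fixed $h>0$. Let $\bar{\boldsymbol\Sigma}$ be the matrix $\bar{\boldsymbol\Sigma}_{ij}=C(\|s_i-s_j\|\mid\sigma^2,\phi,\nu)+\tau^2I(i=j)$ from a Matérn covariance with parameters $(\sigma^2,\phi,\nu,\tau^2)$, and let $\mathbf Q$ be the NNGP precision matrix derived from $\bar{\boldsymbol\Sigma}$ using neighbor sets $N(i)\subseteq\{1,\dots,i-1\}$ of size at most $m$ ($m$-nearest neighbors), chosen so that each location $s_i$ appears in the neighbor sets of at most $M$ locations. Then the maximum eigenvalue of $\mathbf Q$ has an upper bound that is uniform in $n$.
   Context: Matérn covariance: $C(d\mid\sigma^2,\phi,\nu)=\frac{2^{1-\nu}\sigma^2(\sqrt2\phi d)^\nu}{\Gamma(\nu)}\mathcal K_\nu(\sqrt2\phi d)$, $C(0)=\sigma^2$. NNGP precision: $\mathbf B$ strictly lower triangular with $\mathbf B_{i,N(i)}=\bar{\boldsymbol\Sigma}(i,N(i))\bar{\boldsymbol\Sigma}(N(i),N(i))^{-1}$ and zero elsewhere; $\mathbf F$ diagonal with $\mathbf F_{ii}=\bar{\boldsymbol\Sigma}_{ii}-\bar{\boldsymbol\Sigma}(i,N(i))\bar{\boldsymbol\Sigma}(N(i),N(i))^{-1}\bar{\boldsymbol\Sigma}(N(i),i)$; $\mathbf Q=(\mathbf I-\mathbf B)^\top\mathbf F^{-1}(\mathbf I-\mathbf B)$. *)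

theory Defs
  imports "HOL-Analysis.Analysis" "Jordan_Normal_Form.Char_Poly" "Jordan_Normal_Form.DL_Submatrix"
    "Jordan_Normal_Form.Gauss_Jordan_Elimination"
begin

definition besselK :: "real \<Rightarrow> real \<Rightarrow> real" where
  "besselK \<nu> x = integral {0..} (\<lambda>t. exp (- x * cosh t) * cosh (\<nu> * t))"

definition matern :: "real \<Rightarrow> real \<Rightarrow> real \<Rightarrow> real \<Rightarrow> real" where
  "matern \<sigma>2 \<phi> \<nu> d =
     (if d = 0 then \<sigma>2
      else 2 powr (1 - \<nu>) * \<sigma>2 * (sqrt 2 * \<phi> * d) powr \<nu> / Gamma \<nu>
           * besselK \<nu> (sqrt 2 * \<phi> * d))"

text \<open>Covariance matrix with nugget: Sigma_bar(i,j) = C(||s_i - s_j||) + tau2 [i=j].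
  Indices are 0-based: locations s 0, ..., s (n-1).\<close>
definition Sigma_bar :: "real \<Rightarrow> real \<Rightarrow> real \<Rightarrow> real \<Rightarrow> nat \<Rightarrow> (nat \<Rightarrow> real^2) \<Rightarrow> real Matrix.mat" where
  "Sigma_bar \<sigma>2 \<phi> \<nu> \<tau>2 n s =
     Matrix.mat n n (\<lambda>(i,j). matern \<sigma>2 \<phi> \<nu> (dist (s i) (s j)) + (if i = j then \<tau>2 else 0))"

definition minv :: "real Matrix.mat \<Rightarrow> real Matrix.mat" where
  "minv A = (case mat_inverse A of Some B \<Rightarrow> B | None \<Rightarrow> 0\<^sub>m (dim_row A) (dim_row A))"

text \<open>Regression row  Sigma(i,N(i)) Sigma(N(i),N(i))^{-1}  (a 1 x |N(i)| matrix whose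
  columns are indexed by N(i) in increasing order).\<close>
definition nngp_w :: "real Matrix.mat \<Rightarrow> (nat \<Rightarrow> nat set) \<Rightarrow> nat \<Rightarrow> real Matrix.mat" where
  "nngp_w S N i = submatrix S {i} (N i) * minv (submatrix S (N i) (N i))"

definition nngp_B :: "real Matrix.mat \<Rightarrow> (nat \<Rightarrow> nat set) \<Rightarrow> real Matrix.mat" where
  "nngp_B S N = Matrix.mat (dim_row S) (dim_row S)
     (\<lambda>(i,j). if j \<in> N i then nngp_w S N i $$ (0, card {k \<in> N i. k < j}) else 0)"

definition nngp_F_entry :: "real Matrix.mat \<Rightarrow> (nat \<Rightarrow> nat set) \<Rightarrow> nat \<Rightarrow> real" where
  "nngp_F_entry S N i = S $$ (i,i) -
     (submatrix S {i} (N i) * minv (submatrix S (N i) (N i)) * submatrix S (N i) {i}) $$ (0,0)"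

definition nngp_F :: "real Matrix.mat \<Rightarrow> (nat \<Rightarrow> nat set) \<Rightarrow> real Matrix.mat" where
  "nngp_F S N = Matrix.mat (dim_row S) (dim_row S) (\<lambda>(i,j). if i = j then nngp_F_entry S N i else 0)"

definition nngp_Q :: "real Matrix.mat \<Rightarrow> (nat \<Rightarrow> nat set) \<Rightarrow> real Matrix.mat" where
  "nngp_Q S N = (let n = dim_row S; IB = 1\<^sub>m n - nngp_B S N in
     transpose_mat IB * minv (nngp_F S N) * IB)"

end

theory Submission
  imports Defs
begin

definition wgt :: "real \<Rightarrow> real \<Rightarrow> real" where
  "wgt \<nu> s = exp (\<nu> * s - exp s)"

definition gk :: "real \<Rightarrow> real \<Rightarrow> real \<Rightarrow> real" where
  "gk c d s = exp (- (c * exp (- s) * d\<^sup>2))"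

lemma wgt_gamma:
  assumes "\<nu> > 0"
  shows "wgt \<nu> absolutely_integrable_on UNIV \<and> integral UNIV (wgt \<nu>) = Gamma \<nu>"
proof -
  define f where "f = (\<lambda>t::real. t powr (\<nu> - 1) / exp t)"
  have h0: "(f has_integral Gamma \<nu>) {0..}" unfolding f_def by (rule Gamma_integral_real[OF assms])
  have h1: "(f has_integral Gamma \<nu>) {0<..}"
  proof -
    have "((\<lambda>t. if t \<in> {0<..} then f t else 0) has_integral Gamma \<nu>) {0..}"
      by (rule has_integral_spike [of "{0}", rotated 2, OF h0]) auto
    then show ?thesis by (subst (asm) has_integral_restrict) auto
  qed
  have fa: "f absolutely_integrable_on {0<..}"
    by (rule nonnegative_absolutely_integrable_1) (use h1 in \<open>auto simp: f_def\<close>)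
  have img: "exp ` (UNIV::real set) = {0<..}"
  proof (auto)
    fix x :: real assume "0 < x" then show "x \<in> range exp" by (rule_tac image_eqI[of _ _ "ln x"]) auto
  qed
  have eq: "\<And>x. \<bar>exp x\<bar> * f (exp x) = wgt \<nu> x"
    proof -
    fix x :: real
    have "\<bar>exp x\<bar> * f (exp x) = exp x * exp ((\<nu> - 1) * x) / exp (exp x)"
      by (simp add: f_def powr_def)
    also have "\<dots> = exp (x + (\<nu> - 1) * x - exp x)" by (simp add: exp_diff exp_add)
    also have "\<dots> = wgt \<nu> x" by (simp add: wgt_def algebra_simps)
    finally show "\<bar>exp x\<bar> * f (exp x) = wgt \<nu> x" .
  qed
  have "(\<lambda>x. \<bar>exp x\<bar> * f (exp x)) absolutely_integrable_on UNIV \<and>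
           integral UNIV (\<lambda>x. \<bar>exp x\<bar> * f (exp x)) = Gamma \<nu>"
    apply (rule has_absolute_integral_change_of_variables_1'[where g=exp and g'=exp and f=f and S=UNIV, THEN iffD2])
    using fa h1 img by (auto intro!: derivative_eq_intros inj_onI simp: integral_unique)
  then show ?thesis using eq by simp
qed

lemma gk_bounds: "c \<ge> 0 \<Longrightarrow> 0 < gk c d s \<and> gk c d s \<le> 1"
  unfolding gk_def by (auto simp: mult_nonneg_nonneg)

lemma wgt_gk_int:
  assumes "\<nu> > 0" "c \<ge> 0"
  shows "(\<lambda>s. wgt \<nu> s * gk c d s) absolutely_integrable_on UNIV"
proof -
  have "(\<lambda>s. gk c d s * wgt \<nu> s) absolutely_integrable_on UNIV"
  proof (rule absolutely_integrable_bounded_measurable_product_real)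
    show "gk c d \<in> borel_measurable (lebesgue_on UNIV)"
      by (rule continuous_imp_measurable_on_sets_lebesgue) (auto simp: gk_def intro!: continuous_intros)
    show "bounded (gk c d ` UNIV)"
      unfolding bounded_real using gk_bounds[OF assms(2)] by (metis abs_of_pos image_iff)
    show "wgt \<nu> absolutely_integrable_on UNIV" using wgt_gamma[OF assms(1)] by blast
  qed auto
  then show ?thesis by (simp add: mult.commute)
qed

lemma bessel_shift:
  assumes "z > 0" "\<nu> > 0"
  shows "exp (- (z * cosh (s - ln (z/2))) + \<nu> * (s - ln (z/2)))
       = (z/2) powr (- \<nu>) * (wgt \<nu> s * gk 1 (z/2) s)"
proof -
  have e1: "exp (s - ln (z/2)) = exp s * (2/z)" using assms by (simp add: exp_diff)
  have e2: "exp (- (s - ln (z/2))) = exp (-s) * (z/2)" using assms by (simp add: exp_diff exp_minus field_simps)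
  have ch: "z * cosh (s - ln (z/2)) = exp s + (z/2)\<^sup>2 * exp (-s)"
    unfolding cosh_def using assms e1 e2 by (simp add: field_simps power2_eq_square)
  have "exp (- (z * cosh (s - ln (z/2))) + \<nu> * (s - ln (z/2)))
      = exp (\<nu> * s - exp s) * exp (- ((z/2)\<^sup>2 * exp (-s))) * exp (- (\<nu> * ln (z/2)))"
    unfolding ch by (simp add: exp_add[symmetric] algebra_simps)
  also have "\<dots> = (z/2) powr (- \<nu>) * (wgt \<nu> s * gk 1 (z/2) s)"
    using assms by (simp add: wgt_def gk_def powr_def)
  finally show ?thesis .
qed

lemma bessel_int:
  assumes "z > 0" "\<nu> > 0"
  defines "E \<equiv> (\<lambda>t. exp (- (z * cosh t) + \<nu> * t))"
  shows "E absolutely_integrable_on UNIV \<and>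
         integral UNIV E = (z/2) powr (- \<nu>) * integral UNIV (\<lambda>s. wgt \<nu> s * gk 1 (z/2) s)"
proof -
  define L where "L = ln (z/2)"
  have img: "(\<lambda>s. s - L) ` UNIV = UNIV"
  proof -
    have "x \<in> (\<lambda>s. s - L) ` UNIV" for x by (rule image_eqI[of _ _ "x + L"]) auto
    then show ?thesis by auto
  qed
  have dd: "\<And>x. ((\<lambda>s. s - L) has_real_derivative 1) (at x)" by (auto intro!: derivative_eq_intros)
  have eq: "\<And>s. \<bar>1\<bar> * E (s - L) = (z/2) powr (- \<nu>) * (wgt \<nu> s * gk 1 (z/2) s)"
    unfolding E_def L_def using bessel_shift[OF assms(1,2)] by simp
  have ai: "(\<lambda>s. (z/2) powr (- \<nu>) * (wgt \<nu> s * gk 1 (z/2) s)) absolutely_integrable_on UNIV"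
    by (rule set_integrable_mult_right) (rule wgt_gk_int[OF assms(2)], simp)
  have "(\<lambda>s. \<bar>1\<bar> * E (s - L)) absolutely_integrable_on UNIV \<and>
           integral UNIV (\<lambda>s. \<bar>1\<bar> * E (s - L)) = (z/2) powr (- \<nu>) * integral UNIV (\<lambda>s. wgt \<nu> s * gk 1 (z/2) s)"
    unfolding eq using ai by simp
  then have "E absolutely_integrable_on ((\<lambda>s. s - L) ` UNIV) \<and>
     integral ((\<lambda>s. s - L) ` UNIV) E = (z/2) powr (- \<nu>) * integral UNIV (\<lambda>s. wgt \<nu> s * gk 1 (z/2) s)"
    using has_absolute_integral_change_of_variables_1'[where g="\<lambda>s. s - L" and g'="\<lambda>_. 1" and f=E and S=UNIV
      and b="(z/2) powr (- \<nu>) * integral UNIV (\<lambda>s. wgt \<nu> s * gk 1 (z/2) s)"] dd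
    by (auto intro!: inj_onI)
  then show ?thesis unfolding img .
qed

lemma bessel_sym:
  assumes "z > 0" "\<nu> > 0"
  defines "E \<equiv> (\<lambda>t. exp (- (z * cosh t) + \<nu> * t))"
  shows "besselK \<nu> z = integral UNIV E / 2"
proof -
  have EU: "E absolutely_integrable_on UNIV" using bessel_int[OF assms(1,2)] unfolding E_def by blast
  have E1: "E absolutely_integrable_on {0..}"
    by (rule set_integrable_subset[OF EU]) auto
  have E2: "E absolutely_integrable_on {..0}"
    by (rule set_integrable_subset[OF EU]) auto
  have img: "uminus ` {0..} = {..(0::real)}"
  proof -
    have "x \<in> uminus ` {0..}" if "x \<le> 0" for x :: real by (rule image_eqI[of _ _ "-x"]) (use that in auto)
    then show ?thesis by auto
  qed
  have dd: "\<And>x. ((\<lambda>x. - x) has_real_derivative -1) (at x within {0..})" by (auto intro!: derivative_eq_intros)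
  have "(\<lambda>t. \<bar>-1\<bar> * E (- t)) absolutely_integrable_on {0..} \<and>
        integral {0..} (\<lambda>t. \<bar>-1\<bar> * E (- t)) = integral {..0} E"
    using has_absolute_integral_change_of_variables_1'[where g="\<lambda>x. - x" and g'="\<lambda>_. -1" and f=E and S="{0..}"
      and b="integral {..0} E"] E2 img dd
    by (auto intro!: inj_onI)
  then have R1: "(\<lambda>t. E (- t)) absolutely_integrable_on {0..}" and R2: "integral {0..} (\<lambda>t. E (- t)) = integral {..0} E"
    by auto
  have "({0..} \<union> {..0}) = (UNIV::real set)" by auto
  then have "integral UNIV E = integral ({0..} \<union> {..0}) E" by simp
  also have "\<dots> = integral {0..} E + integral {..0} E"
  proof (rule integral_Un)
    have "{0..} \<inter> {..0} = {0::real}" by auto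
    then show "negligible ({0..} \<inter> {..(0::real)})" by simp
  qed (use E1 E2 absolutely_integrable_on_def in auto)
  also have "\<dots> = integral {0..} (\<lambda>t. E t + E (- t))"
    using R2 E1 R1 by (simp add: integral_add set_lebesgue_integral_eq_integral(1))
  also have "\<dots> = integral {0..} (\<lambda>t. 2 * (exp (- z * cosh t) * cosh (\<nu> * t)))"
  proof (rule integral_cong)
    fix t :: real
    have a: "E t + E (- t) = exp (- (z * cosh t)) * (exp (\<nu> * t) + exp (- (\<nu> * t)))"
      by (simp add: E_def distrib_left flip: exp_add)
    have b: "cosh (\<nu> * t) = (exp (\<nu> * t) + exp (- (\<nu> * t))) / 2" by (simp add: cosh_def)
    show "E t + E (- t) = 2 * (exp (- z * cosh t) * cosh (\<nu> * t))" unfolding a b by simp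
  qed
  also have "\<dots> = 2 * besselK \<nu> z" by (simp add: besselK_def)
  finally show ?thesis by simp
qed

lemma matern_repr:
  assumes "\<phi> > 0" "\<nu> > 0" "d \<ge> 0"
  shows "matern \<sigma>2 \<phi> \<nu> d = \<sigma>2 / Gamma \<nu> * integral UNIV (\<lambda>s. wgt \<nu> s * gk (\<phi>\<^sup>2/2) d s)"
proof (cases "d = 0")
  case True
  have G: "Gamma \<nu> > 0" using assms(2) by (rule Gamma_real_pos)
  have "integral UNIV (\<lambda>s. wgt \<nu> s * gk (\<phi>\<^sup>2/2) d s) = Gamma \<nu>"
    using True wgt_gamma[OF assms(2)] by (simp add: gk_def)
  then show ?thesis using True G by (simp add: matern_def)
next
  case False
  then have d: "d > 0" using assms(3) by simp
  define z where "z = sqrt 2 * \<phi> * d"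
  have z: "z > 0" using d assms(1) by (simp add: z_def)
  have gkeq: "gk 1 (z/2) s = gk (\<phi>\<^sup>2/2) d s" for s
  proof -
    have "(z/2)\<^sup>2 = (sqrt 2)\<^sup>2 * \<phi>\<^sup>2 * d\<^sup>2 / 4" unfolding z_def by (simp only: power_mult_distrib power_divide) simp
    also have "\<dots> = \<phi>\<^sup>2 / 2 * d\<^sup>2" by simp
    finally have "(z/2)\<^sup>2 = \<phi>\<^sup>2 / 2 * d\<^sup>2" .
    then show ?thesis unfolding gk_def by (simp add: mult.commute mult.left_commute)
  qed
  define I where "I = integral UNIV (\<lambda>s. wgt \<nu> s * gk (\<phi>\<^sup>2/2) d s)"
  have K: "besselK \<nu> z = (z/2) powr (- \<nu>) * I / 2"
    using bessel_sym[OF z assms(2)] bessel_int[OF z assms(2)] gkeq by (simp add: I_def)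
  have p: "2 powr (1 - \<nu>) * z powr \<nu> * (z/2) powr (- \<nu>) = 2"
  proof -
    have e1: "(z/2) powr (- \<nu>) = z powr (- \<nu>) * 2 powr \<nu>"
    proof -
      have "(z/2) powr (- \<nu>) = z powr (- \<nu>) / 2 powr (- \<nu>)" by (rule powr_divide)
      also have "2 powr (- \<nu>) = 1 / 2 powr \<nu>" by (rule powr_minus_divide)
      finally show ?thesis by simp
    qed
    have "2 powr (1 - \<nu>) * z powr \<nu> * (z/2) powr (- \<nu>) = (2 powr (1 - \<nu>) * 2 powr \<nu>) * (z powr \<nu> * z powr (- \<nu>))"
      unfolding e1 by (simp only: ac_simps)
    also have "\<dots> = 2 powr (1 - \<nu> + \<nu>) * z powr (\<nu> + - \<nu>)" by (simp only: powr_add)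
    also have "\<dots> = 2" using z by simp
    finally show ?thesis .
  qed
  have "matern \<sigma>2 \<phi> \<nu> d = 2 powr (1 - \<nu>) * \<sigma>2 * z powr \<nu> / Gamma \<nu> * ((z/2) powr (- \<nu>) * I / 2)"
  proof -
    have "matern \<sigma>2 \<phi> \<nu> d = 2 powr (1 - \<nu>) * \<sigma>2 * z powr \<nu> / Gamma \<nu> * besselK \<nu> z"
      unfolding matern_def z_def using False by simp
    then show ?thesis unfolding K .
  qed
  also have "\<dots> = \<sigma>2 / Gamma \<nu> * I * ((2 powr (1 - \<nu>) * z powr \<nu> * (z/2) powr (- \<nu>)) / 2)"
    by (simp only: ac_simps times_divide_eq_right times_divide_eq_left) (simp only: divide_divide_eq_left mult.commute)
  also have "\<dots> = \<sigma>2 / Gamma \<nu> * I" unfolding p by simp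
  finally show ?thesis by (simp add: I_def)
qed

lemma dist2_vec2: "(dist (u::real^2) v)\<^sup>2 = (u$1 - v$1)\<^sup>2 + (u$2 - v$2)\<^sup>2"
  unfolding dist_norm power2_norm_eq_inner inner_vec_def sum_2 by (simp add: power2_eq_square)

lemma poly_psd:
  fixes z p r :: "nat \<Rightarrow> real"
  shows "0 \<le> (\<Sum>a<q. \<Sum>b<q. z a * z b * (p a * p b + r a * r b) ^ k)"
proof -
  have sq: "(\<Sum>a<q. z a * p a ^ j * r a ^ (k-j))\<^sup>2 = (\<Sum>a<q. \<Sum>b<q. z a * z b * ((p a * p b) ^ j * (r a * r b) ^ (k-j)))" for j
    by (simp add: power2_eq_square sum_product power_mult_distrib mult_ac)
  have "(\<Sum>a<q. \<Sum>b<q. z a * z b * (p a * p b + r a * r b) ^ k)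
      = (\<Sum>a<q. \<Sum>b<q. \<Sum>j\<le>k. of_nat (k choose j) * (z a * z b * ((p a * p b) ^ j * (r a * r b) ^ (k-j))))"
    by (simp add: binomial_ring sum_distrib_left mult_ac)
  also have "\<dots> = (\<Sum>a<q. \<Sum>j\<le>k. \<Sum>b<q. of_nat (k choose j) * (z a * z b * ((p a * p b) ^ j * (r a * r b) ^ (k-j))))"
    by (rule sum.cong[OF refl], rule sum.swap)
  also have "\<dots> = (\<Sum>j\<le>k. \<Sum>a<q. \<Sum>b<q. of_nat (k choose j) * (z a * z b * ((p a * p b) ^ j * (r a * r b) ^ (k-j))))"
    by (rule sum.swap)
  also have "\<dots> = (\<Sum>j\<le>k. of_nat (k choose j) * (\<Sum>a<q. z a * p a ^ j * r a ^ (k-j))\<^sup>2)"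
    unfolding sq by (simp add: sum_distrib_left)
  also have "\<dots> \<ge> 0" by (intro sum_nonneg mult_nonneg_nonneg) auto
  finally show ?thesis .
qed

lemma gauss_psd:
  fixes y :: "nat \<Rightarrow> real^2" and x :: "nat \<Rightarrow> real"
  assumes "c \<ge> 0"
  shows "0 \<le> (\<Sum>a<q. \<Sum>b<q. x a * x b * exp (- (c * (dist (y a) (y b))\<^sup>2)))"
proof -
  define p where "p a = y a $ 1" for a
  define r where "r a = y a $ 2" for a
  define z where "z a = x a * exp (- (c * ((p a)\<^sup>2 + (r a)\<^sup>2)))" for a
  define u where "u a b = 2 * c * (p a * p b + r a * r b)" for a b
  have e: "x a * x b * exp (- (c * (dist (y a) (y b))\<^sup>2)) = z a * z b * exp (u a b)" for a b
  proof -
    have "- (c * (dist (y a) (y b))\<^sup>2) = - (c * ((p a)\<^sup>2 + (r a)\<^sup>2)) + - (c * ((p b)\<^sup>2 + (r b)\<^sup>2)) + u a b"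
      unfolding dist2_vec2 p_def r_def u_def by (simp add: power2_eq_square algebra_simps)
    then show ?thesis unfolding z_def by (simp add: mult_ac flip: exp_add)
  qed
  have S: "(\<lambda>k. \<Sum>a<q. \<Sum>b<q. z a * z b * (u a b ^ k /\<^sub>R fact k)) sums (\<Sum>a<q. \<Sum>b<q. z a * z b * exp (u a b))"
    by (intro sums_sum sums_mult exp_converges)
  have nn: "0 \<le> (\<Sum>a<q. \<Sum>b<q. z a * z b * (u a b ^ k /\<^sub>R fact k))" for k
  proof -
    have "(\<Sum>a<q. \<Sum>b<q. z a * z b * (u a b ^ k /\<^sub>R fact k))
        = ((2 * c) ^ k / fact k) * (\<Sum>a<q. \<Sum>b<q. z a * z b * (p a * p b + r a * r b) ^ k)"
    proof -
      have uk: "u a b ^ k = (2*c)^k * (p a * p b + r a * r b)^k" for a b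
        unfolding u_def by (simp only: power_mult_distrib)
      show ?thesis unfolding uk by (simp add: sum_distrib_left divide_inverse mult_ac)
    qed
    also have "\<dots> \<ge> 0" using assms poly_psd by (intro mult_nonneg_nonneg) auto
    finally show ?thesis .
  qed
  have "0 \<le> (\<Sum>a<q. \<Sum>b<q. z a * z b * exp (u a b))"
    by (rule sums_le[OF _ sums_zero S]) (use nn in auto)
  then show ?thesis unfolding e .
qed

lemma gersh:
  fixes x :: "nat \<Rightarrow> real" and G :: "nat \<Rightarrow> nat \<Rightarrow> real"
  assumes q: "q \<le> m + 1" and e0: "0 \<le> \<epsilon>" and em: "\<epsilon> * m \<le> 1/2"
    and diag: "\<And>a. a < q \<Longrightarrow> G a a = 1"
    and off: "\<And>a b. a < q \<Longrightarrow> b < q \<Longrightarrow> a \<noteq> b \<Longrightarrow> 0 \<le> G a b \<and> G a b \<le> \<epsilon>"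
  shows "(\<Sum>a<q. (x a)\<^sup>2) / 2 \<le> (\<Sum>a<q. \<Sum>b<q. x a * x b * G a b)"
proof -
  define X where "X = (\<Sum>a<q. (x a)\<^sup>2)"
  have X0: "X \<ge> 0" unfolding X_def by (intro sum_nonneg) auto
  have trm: "(if a = b then (1 + \<epsilon>) * (x a)\<^sup>2 else 0) - \<epsilon> * ((x a)\<^sup>2 + (x b)\<^sup>2) / 2 \<le> x a * x b * G a b"
    if "a < q" "b < q" for a b
  proof (cases "a = b")
    case True
    then have "x a * x b * G a b = (x a)\<^sup>2" using diag[OF that(1)] by (simp add: power2_eq_square)
    moreover have "(if a = b then (1 + \<epsilon>) * (x a)\<^sup>2 else 0) - \<epsilon> * ((x a)\<^sup>2 + (x b)\<^sup>2) / 2 = (x a)\<^sup>2"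
      using True by (simp add: field_simps)
    ultimately show ?thesis by simp
  next
    case False
    have g: "0 \<le> G a b" "G a b \<le> \<epsilon>" using off[OF that False] by auto
    have sq: "0 \<le> (\<bar>x a\<bar> - \<bar>x b\<bar>)\<^sup>2" by simp
    have h1: "\<bar>x a * x b\<bar> \<le> ((x a)\<^sup>2 + (x b)\<^sup>2) / 2"
      using sq unfolding power2_diff power2_abs abs_mult by simp
    have h2: "- (\<bar>x a * x b\<bar> * G a b) \<le> x a * x b * G a b"
    proof -
      have "\<bar>x a * x b * G a b\<bar> = \<bar>x a * x b\<bar> * G a b" using g(1) by (simp add: abs_mult)
      moreover have "- (x a * x b * G a b) \<le> \<bar>x a * x b * G a b\<bar>" by (rule abs_ge_minus_self)
      ultimately show ?thesis by linarith
    qed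
    have h3: "\<bar>x a * x b\<bar> * G a b \<le> \<bar>x a * x b\<bar> * \<epsilon>" using g by (intro mult_left_mono) auto
    have h4: "\<bar>x a * x b\<bar> * \<epsilon> \<le> ((x a)\<^sup>2 + (x b)\<^sup>2) / 2 * \<epsilon>"
      using h1 e0 by (intro mult_right_mono) auto
    have "(if a = b then (1 + \<epsilon>) * (x a)\<^sup>2 else 0) - \<epsilon> * ((x a)\<^sup>2 + (x b)\<^sup>2) / 2
        = - (((x a)\<^sup>2 + (x b)\<^sup>2) / 2 * \<epsilon>)" using False by simp
    then show ?thesis using h2 h3 h4 by linarith
  qed
  have s1: "(\<Sum>a<q. \<Sum>b<q. (if a = b then (1 + \<epsilon>) * (x a)\<^sup>2 else 0)) = (1 + \<epsilon>) * X"
    unfolding X_def by (simp add: sum_distrib_left)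
  have s2: "(\<Sum>a<q. \<Sum>b<q. \<epsilon> * ((x a)\<^sup>2 + (x b)\<^sup>2) / 2) = \<epsilon> * real q * X"
  proof -
    have "(\<Sum>a<q. \<Sum>b<q. \<epsilon> * ((x a)\<^sup>2 + (x b)\<^sup>2) / 2) = (\<epsilon> / 2) * (\<Sum>a<q. \<Sum>b<q. (x a)\<^sup>2 + (x b)\<^sup>2)"
      by (simp add: sum_distrib_left)
    also have "(\<Sum>a<q. \<Sum>b<q. (x a)\<^sup>2 + (x b)\<^sup>2) = (\<Sum>a<q. real q * (x a)\<^sup>2 + X)"
      unfolding X_def by (simp add: sum.distrib)
    also have "\<dots> = 2 * real q * X" unfolding X_def by (simp add: sum.distrib sum_distrib_left mult.assoc)
    finally show ?thesis by simp
  qed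
  have "(1 + \<epsilon>) * X - \<epsilon> * real q * X \<le> (\<Sum>a<q. \<Sum>b<q. x a * x b * G a b)"
  proof -
    have "(\<Sum>a<q. \<Sum>b<q. (if a = b then (1 + \<epsilon>) * (x a)\<^sup>2 else 0) - \<epsilon> * ((x a)\<^sup>2 + (x b)\<^sup>2) / 2)
       \<le> (\<Sum>a<q. \<Sum>b<q. x a * x b * G a b)"
      by (intro sum_mono trm) auto
    then show ?thesis by (simp only: sum_subtractf s1 s2)
  qed
  moreover have "X / 2 \<le> (1 + \<epsilon>) * X - \<epsilon> * real q * X"
  proof -
    have "real q \<le> real m + 1" using q by simp
    then have "\<epsilon> * real q \<le> \<epsilon> * (real m + 1)" using e0 by (rule mult_left_mono)
    then have "\<epsilon> * real q * X \<le> \<epsilon> * (real m + 1) * X" using X0 by (rule mult_right_mono)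
    moreover have "\<epsilon> * m * X \<le> 1/2 * X" using em X0 by (rule mult_right_mono)
    ultimately show ?thesis by (simp add: algebra_simps)
  qed
  ultimately show ?thesis unfolding X_def by linarith
qed

lemma matern_pd:
  fixes h \<sigma>2 \<phi> \<nu> :: real and m :: nat
  assumes h: "h > 0" and s2: "\<sigma>2 > 0" and ph: "\<phi> > 0" and nu: "\<nu> > 0"
  shows "\<exists>c0>0. \<forall>q (t::nat \<Rightarrow> real^2) (x::nat \<Rightarrow> real). q \<le> m + 1 \<longrightarrow>
           (\<forall>a<q. \<forall>b<q. a \<noteq> b \<longrightarrow> h \<le> dist (t a) (t b)) \<longrightarrow>
           c0 * (\<Sum>a<q. (x a)\<^sup>2) \<le> (\<Sum>a<q. \<Sum>b<q. x a * x b * matern \<sigma>2 \<phi> \<nu> (dist (t a) (t b)))"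
proof -
  define \<beta> where "\<beta> = \<phi>\<^sup>2 / 2"
  have b0: "\<beta> > 0" using ph by (simp add: \<beta>_def)
  define L where "L = ln (2 * real m + 2)"
  have L0: "L > 0" unfolding L_def by simp
  define s0 where "s0 = ln (\<beta> * h\<^sup>2 / L)"
  have es0: "exp (- s0) = L / (\<beta> * h\<^sup>2)" unfolding s0_def using b0 h L0 by (simp add: exp_minus)
  define \<omega> where "\<omega> = exp (\<nu> * (s0 - 1) - exp s0)"
  define \<kappa> where "\<kappa> = \<sigma>2 / Gamma \<nu>"
  have k0: "\<kappa> > 0" unfolding \<kappa>_def using s2 Gamma_real_pos[OF nu] by simp
  define c0 where "c0 = \<kappa> * \<omega> / 2"
  have c0: "c0 > 0" unfolding c0_def \<omega>_def using k0 by simp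
  show ?thesis
  proof (intro exI[of _ c0] conjI allI impI c0)
    fix q and t :: "nat \<Rightarrow> real^2" and x :: "nat \<Rightarrow> real"
    assume q: "q \<le> m + 1" and sep: "\<forall>a<q. \<forall>b<q. a \<noteq> b \<longrightarrow> h \<le> dist (t a) (t b)"
    define d where "d a b = dist (t a) (t b)" for a b
    define X where "X = (\<Sum>a<q. (x a)\<^sup>2)"
    define Qf where "Qf s = (\<Sum>a<q. \<Sum>b<q. x a * x b * gk \<beta> (d a b) s)" for s
    define \<Phi> where "\<Phi> s = wgt \<nu> s * Qf s" for s
    have intab: "(\<lambda>s. x a * x b * (wgt \<nu> s * gk \<beta> (d a b) s)) integrable_on UNIV" for a b
    proof -
      have "(\<lambda>s. wgt \<nu> s * gk \<beta> (d a b) s) integrable_on UNIV"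
        using wgt_gk_int[OF nu, of \<beta> "d a b"] b0 absolutely_integrable_on_def by auto
      from integrable_cmul[OF this, of "x a * x b"] show ?thesis by simp
    qed
    have Phi_eq: "\<Phi> s = (\<Sum>a<q. \<Sum>b<q. x a * x b * (wgt \<nu> s * gk \<beta> (d a b) s))" for s
      unfolding \<Phi>_def Qf_def by (simp add: sum_distrib_left mult_ac)
    have Phi_int: "\<Phi> integrable_on UNIV"
      unfolding Phi_eq by (intro integrable_sum finite_lessThan intab)
    have lhs: "(\<Sum>a<q. \<Sum>b<q. x a * x b * matern \<sigma>2 \<phi> \<nu> (d a b)) = \<kappa> * integral UNIV \<Phi>"
    proof -
      have "(\<Sum>a<q. \<Sum>b<q. x a * x b * matern \<sigma>2 \<phi> \<nu> (d a b))
          = (\<Sum>a<q. \<Sum>b<q. \<kappa> * integral UNIV (\<lambda>s. x a * x b * (wgt \<nu> s * gk \<beta> (d a b) s)))"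
        by (intro sum.cong refl) (simp add: matern_repr[OF ph nu] d_def \<kappa>_def \<beta>_def)
      also have "\<dots> = \<kappa> * integral UNIV \<Phi>"
        unfolding Phi_eq
        by (simp add: Henstock_Kurzweil_Integration.integral_sum intab integrable_sum sum_distrib_left)
      finally show ?thesis .
    qed
    have Qf0: "Qf s \<ge> 0" for s
    proof -
      have "Qf s = (\<Sum>a<q. \<Sum>b<q. x a * x b * exp (- ((\<beta> * exp (- s)) * (dist (t a) (t b))\<^sup>2)))"
        unfolding Qf_def gk_def d_def by (simp add: mult.assoc)
      also have "\<dots> \<ge> 0" by (rule gauss_psd) (use b0 in simp)
      finally show ?thesis .
    qed
    have Phi0: "\<Phi> s \<ge> 0" for s unfolding \<Phi>_def using Qf0[of s] by (simp add: wgt_def)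
    have Qf_big: "X / 2 \<le> Qf s" if "s \<le> s0" for s
    proof -
      have es: "exp (- s0) \<le> exp (- s)" using that by simp
      have "L \<le> \<beta> * exp (- s) * h\<^sup>2"
      proof -
        have "L = \<beta> * exp (- s0) * h\<^sup>2" unfolding es0 using b0 h by simp
        also have "\<dots> \<le> \<beta> * exp (- s) * h\<^sup>2" using es b0 by (intro mult_right_mono mult_left_mono) auto
        finally show ?thesis .
      qed
      show ?thesis unfolding X_def Qf_def
      proof (rule gersh[OF q, of "1 / (2 * real m + 2)"])
        show "0 \<le> 1 / (2 * real m + 2)" by simp
        show "1 / (2 * real m + 2) * real m \<le> 1 / 2" by (simp add: field_simps)
        show "gk \<beta> (d a a) s = 1" for a by (simp add: gk_def d_def)
        fix a b assume ab: "a < q" "b < q" "a \<noteq> b"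
        have hd: "h \<le> d a b" using sep ab unfolding d_def by auto
        then have "h\<^sup>2 \<le> (d a b)\<^sup>2" using h by (intro power_mono) auto
        then have "\<beta> * exp (- s) * h\<^sup>2 \<le> \<beta> * exp (- s) * (d a b)\<^sup>2" using b0 by (intro mult_left_mono) auto
        then have "L \<le> \<beta> * exp (- s) * (d a b)\<^sup>2" using \<open>L \<le> \<beta> * exp (- s) * h\<^sup>2\<close> by linarith
        then have "gk \<beta> (d a b) s \<le> exp (- L)" unfolding gk_def by simp
        also have "exp (- L) = 1 / (2 * real m + 2)" unfolding L_def
          by (simp add: exp_minus inverse_eq_divide)
        finally show "0 \<le> gk \<beta> (d a b) s \<and> gk \<beta> (d a b) s \<le> 1 / (2 * real m + 2)"
          by (simp add: gk_def)
      qed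
    qed
    have "\<omega> * (X / 2) \<le> integral {s0 - 1..s0} \<Phi>"
    proof -
      have "integral {s0 - 1..s0} (\<lambda>_. \<omega> * (X / 2)) \<le> integral {s0 - 1..s0} \<Phi>"
      proof (rule integral_le)
        show "\<Phi> integrable_on {s0 - 1..s0}" by (rule integrable_on_subinterval[OF Phi_int]) auto
        fix s assume s: "s \<in> {s0 - 1..s0}"
        have w: "\<omega> \<le> wgt \<nu> s"
        proof -
          have "\<nu> * (s0 - 1) \<le> \<nu> * s" using s nu by (intro mult_left_mono) auto
          moreover have "exp s \<le> exp s0" using s by simp
          ultimately have "\<nu> * (s0 - 1) - exp s0 \<le> \<nu> * s - exp s" by linarith
          then show ?thesis unfolding \<omega>_def wgt_def by simp
        qed
        have X0: "0 \<le> X / 2" unfolding X_def by (simp add: sum_nonneg)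
        show "\<omega> * (X / 2) \<le> \<Phi> s" unfolding \<Phi>_def
          using Qf_big[of s] s w X0 by (intro mult_mono) (auto simp: \<omega>_def wgt_def)
      qed auto
      then show ?thesis by simp
    qed
    also have "integral {s0 - 1..s0} \<Phi> \<le> integral UNIV \<Phi>"
      by (rule integral_subset_le) (use Phi_int Phi0 in \<open>auto intro: integrable_on_subinterval\<close>)
    finally have "\<omega> * (X / 2) \<le> integral UNIV \<Phi>" .
    then have "\<kappa> * (\<omega> * (X / 2)) \<le> \<kappa> * integral UNIV \<Phi>" using k0 by (intro mult_left_mono) auto
    then show "c0 * (\<Sum>a<q. (x a)\<^sup>2) \<le> (\<Sum>a<q. \<Sum>b<q. x a * x b * matern \<sigma>2 \<phi> \<nu> (dist (t a) (t b)))"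
      using lhs unfolding c0_def X_def d_def by (simp add: mult_ac)
  qed
qed

lemma mult_entry:
  fixes A B :: "'a::comm_ring_1 mat"
  assumes "A \<in> carrier_mat r s" "B \<in> carrier_mat s t" "i < r" "j < t"
  shows "(A * B) $$ (i,j) = (\<Sum>l<s. A $$ (i,l) * B $$ (l,j))"
  using assms by (simp add: scalar_prod_def atLeast0LessThan)

lemma nngp_local:
  fixes S :: "real mat" and c0 :: real
  assumes S: "S \<in> carrier_mat n n"
    and sym: "\<And>i j. i < n \<Longrightarrow> j < n \<Longrightarrow> S $$ (i,j) = S $$ (j,i)"
    and PD: "\<And>q idx x. q \<le> m + 1 \<Longrightarrow> inj_on idx {..<q} \<Longrightarrow> idx ` {..<q} \<subseteq> {..<n} \<Longrightarrow>
               c0 * (\<Sum>a<q. (x a)\<^sup>2) \<le> (\<Sum>a<q. \<Sum>b<q. x a * x b * S $$ (idx a, idx b))"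
    and c0: "c0 > 0" and k: "k < n" and Nk: "N k \<subseteq> {..<k}" and cardN: "card (N k) \<le> m"
  shows "c0 * (1 + (\<Sum>a<card (N k). (nngp_w S N k $$ (0,a))\<^sup>2)) \<le> nngp_F_entry S N k
         \<and> nngp_F_entry S N k \<le> S $$ (k,k)"
proof -
  define P where "P = N k"
  define p where "p = card P"
  have finP: "finite P" unfolding P_def using Nk finite_subset by blast
  have dS: "dim_row S = n" "dim_col S = n" using S by auto
  have setP: "{i. i < n \<and> i \<in> P} = P" unfolding P_def using Nk k by auto
  have setk: "{i. i < n \<and> i \<in> {k}} = {k}" using k by auto
  have pk: "pick {k} 0 = k" by (simp add: Least_equality)
  have pickP: "pick P a \<in> P" if "a < p" for a using pick_in_set that unfolding p_def by blast
  have pick_lt: "pick P a < k" if "a < p" for a using pickP[OF that] Nk unfolding P_def by auto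
  have pick_n: "pick P a < n" if "a < p" for a using pick_lt[OF that] k by linarith
  have pick_inj: "inj_on (pick P) {..<p}"
  proof (rule inj_onI)
    fix a b assume ab: "a \<in> {..<p}" "b \<in> {..<p}" "pick P a = pick P b"
    show "a = b"
    proof (rule ccontr)
      assume "a \<noteq> b"
      then consider "a < b" | "b < a" by linarith
      then show False
        using pick_mono[of b P a] pick_mono[of a P b] ab unfolding p_def by auto
    qed
  qed
  have setPk: "{i. i < dim_row S \<and> i \<in> P} = P" "{i. i < dim_col S \<and> i \<in> P} = P"
    "{i. i < dim_row S \<and> i \<in> {k}} = {k}" "{i. i < dim_col S \<and> i \<in> {k}} = {k}"
    unfolding dS using setP setk by simp_all
  define A where "A = submatrix S P P"
  have A: "A \<in> carrier_mat p p" unfolding A_def by (intro carrier_matI) (simp_all only: dim_submatrix setPk p_def)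
  have Aij: "A $$ (a,b) = S $$ (pick P a, pick P b)" if "a < p" "b < p" for a b
    unfolding A_def by (rule submatrix_index) (use that in \<open>simp_all only: setPk p_def\<close>)
  define R where "R = submatrix S {k} P"
  have R: "R \<in> carrier_mat 1 p" unfolding R_def by (intro carrier_matI) (simp_all only: dim_submatrix setPk p_def card_1_singleton_iff, auto)
  have Rij: "R $$ (0,b) = S $$ (k, pick P b)" if "b < p" for b
  proof -
    have "R $$ (0,b) = S $$ (pick {k} 0, pick P b)"
      unfolding R_def by (rule submatrix_index) (use that in \<open>simp_all only: setPk p_def card_1_singleton_iff\<close>, simp)
    then show ?thesis unfolding pk .
  qed
  define Cc where "Cc = submatrix S P {k}"
  have Cc: "Cc \<in> carrier_mat p 1" unfolding Cc_def by (intro carrier_matI) (simp_all only: dim_submatrix setPk p_def, auto)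
  have Ccij: "Cc $$ (a,0) = S $$ (pick P a, k)" if "a < p" for a
  proof -
    have "Cc $$ (a,0) = S $$ (pick P a, pick {k} 0)"
      unfolding Cc_def by (rule submatrix_index) (use that in \<open>simp_all only: setPk p_def\<close>, simp)
    then show ?thesis unfolding pk .
  qed
  have pdA: "c0 * (\<Sum>a<p. (x a)\<^sup>2) \<le> (\<Sum>a<p. \<Sum>b<p. x a * x b * A $$ (a,b))" for x
  proof -
    have "c0 * (\<Sum>a<p. (x a)\<^sup>2) \<le> (\<Sum>a<p. \<Sum>b<p. x a * x b * S $$ (pick P a, pick P b))"
      by (rule PD) (use cardN pick_inj pick_n in \<open>auto simp: p_def P_def\<close>)
    also have "\<dots> = (\<Sum>a<p. \<Sum>b<p. x a * x b * A $$ (a,b))" by (simp add: Aij)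
    finally show ?thesis .
  qed
  have detA: "det A \<noteq> 0"
  proof
    assume "det A = 0"
    then obtain v where v: "v \<in> carrier_vec p" "v \<noteq> 0\<^sub>v p" "A *\<^sub>v v = 0\<^sub>v p"
      using det_0_iff_vec_prod_zero_field[OF A] by blast
    have Av: "(\<Sum>b<p. A $$ (a,b) * v $ b) = 0" if "a < p" for a
    proof -
      have "(A *\<^sub>v v) $ a = 0" using v(3) that by simp
      then show ?thesis using A v(1) that by (simp add: scalar_prod_def atLeast0LessThan)
    qed
    have "c0 * (\<Sum>a<p. (v $ a)\<^sup>2) \<le> (\<Sum>a<p. \<Sum>b<p. v $ a * v $ b * A $$ (a,b))" by (rule pdA)
    also have "\<dots> = (\<Sum>a<p. v $ a * (\<Sum>b<p. A $$ (a,b) * v $ b))" by (simp add: sum_distrib_left mult_ac)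
    also have "\<dots> = 0" using Av by simp
    finally have le: "c0 * (\<Sum>a<p. (v $ a)\<^sup>2) \<le> 0" .
    obtain a where a: "a < p" "v $ a \<noteq> 0" using v(1,2) by (metis carrier_vecD eq_vecI index_zero_vec(1,2))
    have "(v $ a)\<^sup>2 \<le> (\<Sum>a<p. (v $ a)\<^sup>2)" using a by (intro member_le_sum) auto
    moreover have "(v $ a)\<^sup>2 > 0" using a by simp
    ultimately have "(\<Sum>a<p. (v $ a)\<^sup>2) > 0" by linarith
    then show False using le c0 by (simp add: mult_le_0_iff)
  qed
  have U: "A \<in> Units (ring_mat TYPE(real) p ())" by (rule det_non_zero_imp_unit[OF A detA])
  have "mat_inverse A \<noteq> None"
  proof
    assume N: "mat_inverse A = None"
    have "A \<notin> Units (ring_mat TYPE(real) p ())" by (rule mat_inverse(1)[OF A N])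
    then show False using U by contradiction
  qed
  then obtain B where B: "mat_inverse A = Some B" by auto
  have AB: "A * B = 1\<^sub>m p" "B * A = 1\<^sub>m p" "B \<in> carrier_mat p p" using mat_inverse(2)[OF A B] by auto
  have mB: "minv A = B" unfolding minv_def using B by simp
  define W where "W = R * B"
  have W: "W \<in> carrier_mat 1 p" unfolding W_def using R AB by auto
  define w where "w a = W $$ (0,a)" for a
  have wdef: "nngp_w S N k = W" unfolding nngp_w_def W_def R_def A_def P_def mB[unfolded A_def P_def] ..
  have WA: "W * A = R" unfolding W_def using R AB A by simp
  have rho: "S $$ (k, pick P b) = (\<Sum>a<p. w a * A $$ (a,b))" if "b < p" for b
  proof -
    have "R $$ (0,b) = (W * A) $$ (0,b)" using WA by simp
    also have "\<dots> = (\<Sum>a<p. w a * A $$ (a,b))" unfolding w_def by (rule mult_entry[OF W A]) (use that in auto)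
    finally show ?thesis using Rij[OF that] by simp
  qed
  have Fe: "nngp_F_entry S N k = S $$ (k,k) - (\<Sum>a<p. w a * S $$ (k, pick P a))"
  proof -
    have "(submatrix S {k} (N k) * minv (submatrix S (N k) (N k)) * submatrix S (N k) {k}) = W * Cc"
      unfolding W_def R_def Cc_def P_def mB[unfolded A_def P_def] ..
    then have "(submatrix S {k} (N k) * minv (submatrix S (N k) (N k)) * submatrix S (N k) {k}) $$ (0,0)
        = (\<Sum>a<p. w a * Cc $$ (a,0))" unfolding w_def using mult_entry[OF W Cc] by simp
    also have "\<dots> = (\<Sum>a<p. w a * S $$ (k, pick P a))"
      by (intro sum.cong refl) (simp add: Ccij sym k pick_lt less_trans[OF pick_lt k])
    finally show ?thesis unfolding nngp_F_entry_def by simp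
  qed
  define QA where "QA = (\<Sum>a<p. \<Sum>b<p. w a * w b * A $$ (a,b))"
  have QAeq: "(\<Sum>b<p. w b * S $$ (k, pick P b)) = QA"
    unfolding QA_def by (simp add: rho sum_distrib_left mult_ac) (subst sum.swap, simp add: mult_ac)
  have QA0: "c0 * (\<Sum>a<p. (w a)\<^sup>2) \<le> QA" unfolding QA_def by (rule pdA)
  have F_eq: "nngp_F_entry S N k = S $$ (k,k) - QA" using Fe QAeq by simp
  have upper: "nngp_F_entry S N k \<le> S $$ (k,k)"
  proof -
    have "0 \<le> c0 * (\<Sum>a<p. (w a)\<^sup>2)" using c0 by (simp add: sum_nonneg)
    then show ?thesis using F_eq QA0 by linarith
  qed
  define idx where "idx a = (case a of 0 \<Rightarrow> k | Suc a' \<Rightarrow> pick P a')" for a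
  define x where "x a = (case a of 0 \<Rightarrow> 1 | Suc a' \<Rightarrow> - w a')" for a
  have "c0 * (\<Sum>a<Suc p. (x a)\<^sup>2) \<le> (\<Sum>a<Suc p. \<Sum>b<Suc p. x a * x b * S $$ (idx a, idx b))"
  proof (rule PD)
    show "Suc p \<le> m + 1" using cardN unfolding p_def P_def by simp
    show "inj_on idx {..<Suc p}"
    proof (rule inj_onI)
      fix a b assume ab: "a \<in> {..<Suc p}" "b \<in> {..<Suc p}" "idx a = idx b"
      show "a = b"
      proof (cases a; cases b)
        fix a' b' assume "a = Suc a'" "b = Suc b'"
        then show "a = b" using ab pick_inj by (auto simp: idx_def inj_on_def)
      next
        fix a' assume "a = Suc a'" "b = 0"
        then show "a = b" using ab pick_lt[of a'] by (auto simp: idx_def)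
      next
        fix b' assume "a = 0" "b = Suc b'"
        then show "a = b" using ab pick_lt[of b'] by (auto simp: idx_def)
      qed auto
    qed
    show "idx ` {..<Suc p} \<subseteq> {..<n}"
      using k pick_n by (auto simp: idx_def split: nat.splits)
  qed
  also have "(\<Sum>a<Suc p. \<Sum>b<Suc p. x a * x b * S $$ (idx a, idx b)) = S $$ (k,k) - QA"
  proof -
    have s1: "(\<Sum>b<p. - w b * S $$ (k, pick P b)) = - QA" using QAeq by (simp add: sum_negf)
    have s2: "(\<Sum>a<p. - w a * S $$ (pick P a, k)) = - QA"
      using QAeq by (simp add: sum_negf sym k less_trans[OF pick_lt k])
    have s3: "(\<Sum>a<p. \<Sum>b<p. - w a * - w b * S $$ (pick P a, pick P b)) = QA"
      unfolding QA_def by (simp add: Aij)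
    show ?thesis
      by (simp only: sum.lessThan_Suc_shift x_def idx_def nat.case s3 sum.distrib) (use s1 s2 in simp)
  qed
  also have "\<dots> = nngp_F_entry S N k" using F_eq by simp
  finally have lower0: "c0 * (\<Sum>a<Suc p. (x a)\<^sup>2) \<le> nngp_F_entry S N k" .
  have "(\<Sum>a<Suc p. (x a)\<^sup>2) = 1 + (\<Sum>a<p. (w a)\<^sup>2)"
    by (simp only: sum.lessThan_Suc_shift x_def nat.case) simp
  then have lower: "c0 * (1 + (\<Sum>a<p. (w a)\<^sup>2)) \<le> nngp_F_entry S N k" using lower0 by simp
  show ?thesis using lower upper unfolding w_def wdef p_def P_def by simp
qed

lemma nngp_global:
  fixes S :: "real mat" and c0 Wb e :: real
  assumes S: "S \<in> carrier_mat n n"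
    and c0: "c0 > 0"
    and Fpos: "\<And>k. k < n \<Longrightarrow> c0 \<le> nngp_F_entry S N k"
    and Bsq: "\<And>k j. k < n \<Longrightarrow> j < n \<Longrightarrow> (nngp_B S N $$ (k,j))\<^sup>2 \<le> Wb"
    and Wb0: "Wb \<ge> 0"
    and Nk: "\<And>k. k < n \<Longrightarrow> N k \<subseteq> {..<k}"
    and cardN: "\<And>k. k < n \<Longrightarrow> card (N k) \<le> m"
    and MM: "\<And>j. j < n \<Longrightarrow> card {i. i < n \<and> j \<in> N i} \<le> M"
    and ev: "eigenvalue (nngp_Q S N) e"
  shows "e \<le> (real m + 1) * (1 + Wb) * (1 + real M) / c0"
proof -
  have dS: "dim_row S = n" using S by auto
  define f where "f k = nngp_F_entry S N k" for k
  have f0: "f k > 0" if "k < n" for k using Fpos[OF that] c0 unfolding f_def by linarith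
  define B where "B = nngp_B S N"
  have Bc: "B \<in> carrier_mat n n" unfolding B_def nngp_B_def dS by auto
  have Bij: "B $$ (k,j) = 0" if "k < n" "j < n" "j \<notin> N k" for k j
    unfolding B_def nngp_B_def dS using that by simp
  define F where "F = nngp_F S N"
  have Fc: "F \<in> carrier_mat n n" unfolding F_def nngp_F_def dS by auto
  have Fij: "F $$ (i,j) = (if i = j then f i else 0)" if "i < n" "j < n" for i j
    unfolding F_def nngp_F_def dS f_def using that by simp
  have detF: "det F \<noteq> 0"
  proof -
    have ut: "upper_triangular F" using Fc Fij by (intro upper_triangularI) auto
    have "det F = prod_list (diag_mat F)" by (rule det_upper_triangular[OF ut Fc])
    also have "\<dots> = (\<Prod>i = 0..<n. F $$ (i,i))" using Fc by (simp add: prod_list_diag_prod)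
    also have "\<dots> = (\<Prod>i = 0..<n. f i)" by (rule prod.cong) (auto simp: Fij)
    also have "\<dots> \<noteq> 0" using f0 by (simp add: prod_zero_iff) (metis atLeastLessThan_iff less_irrefl)
    finally show ?thesis .
  qed
  have U: "F \<in> Units (ring_mat TYPE(real) n ())" by (rule det_non_zero_imp_unit[OF Fc detF])
  have "mat_inverse F \<noteq> None"
  proof
    assume N: "mat_inverse F = None"
    have "F \<notin> Units (ring_mat TYPE(real) n ())" by (rule mat_inverse(1)[OF Fc N])
    then show False using U by contradiction
  qed
  then obtain G where G: "mat_inverse F = Some G" by auto
  have FG: "F * G = 1\<^sub>m n" "G \<in> carrier_mat n n" using mat_inverse(2)[OF Fc G] by auto
  have mG: "minv F = G" unfolding minv_def using G by simp
  have Gij: "G $$ (i,j) = (if i = j then 1 / f i else 0)" if ij: "i < n" "j < n" for i j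
  proof -
    have "(F * G) $$ (i,j) = (\<Sum>l<n. F $$ (i,l) * G $$ (l,j))" by (rule mult_entry[OF Fc FG(2) ij])
    also have "\<dots> = (\<Sum>l<n. if l = i then f i * G $$ (i,j) else 0)"
      by (rule sum.cong) (auto simp: Fij ij)
    also have "\<dots> = f i * G $$ (i,j)" using ij by simp
    finally have "f i * G $$ (i,j) = (if i = j then 1 else 0)" using FG(1) ij by simp
    then show ?thesis using f0[OF ij(1)] by (auto simp: field_simps)
  qed
  define IB where "IB = 1\<^sub>m n - B"
  have IBc: "IB \<in> carrier_mat n n" unfolding IB_def using Bc by auto
  have IBij: "IB $$ (i,j) = (if i = j then 1 else 0) - B $$ (i,j)" if "i < n" "j < n" for i j
    unfolding IB_def using that Bc by simp
  have Qdef: "nngp_Q S N = transpose_mat IB * G * IB"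
    unfolding nngp_Q_def Let_def dS IB_def B_def mG[unfolded F_def] ..
  define Q where "Q = nngp_Q S N"
  have TG: "(transpose_mat IB * G) $$ (i,l) = IB $$ (l,i) / f l" if "i < n" "l < n" for i l
  proof -
    have "(transpose_mat IB * G) $$ (i,l) = (\<Sum>r<n. transpose_mat IB $$ (i,r) * G $$ (r,l))"
      by (rule mult_entry) (use IBc FG that in auto)
    also have "\<dots> = (\<Sum>r<n. if r = l then IB $$ (l,i) / f l else 0)"
      by (rule sum.cong) (use IBc that in \<open>auto simp: Gij\<close>)
    also have "\<dots> = IB $$ (l,i) / f l" using that by simp
    finally show ?thesis .
  qed
  have TGc: "transpose_mat IB * G \<in> carrier_mat n n" using IBc FG by auto
  have Qc: "Q \<in> carrier_mat n n" unfolding Q_def Qdef using TGc IBc by auto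
  have Qij: "Q $$ (i,j) = (\<Sum>l<n. IB $$ (l,i) * IB $$ (l,j) / f l)" if "i < n" "j < n" for i j
  proof -
    have "Q $$ (i,j) = (\<Sum>l<n. (transpose_mat IB * G) $$ (i,l) * IB $$ (l,j))"
      unfolding Q_def Qdef by (rule mult_entry[OF TGc IBc that])
    also have "\<dots> = (\<Sum>l<n. IB $$ (l,i) * IB $$ (l,j) / f l)"
      by (rule sum.cong) (use that in \<open>auto simp: TG\<close>)
    finally show ?thesis .
  qed
  obtain v where v: "v \<in> carrier_vec n" "v \<noteq> 0\<^sub>v n" "Q *\<^sub>v v = e \<cdot>\<^sub>v v"
    using ev Qc unfolding eigenvalue_def eigenvector_def Q_def by auto
  define V where "V = (\<Sum>i<n. (v $ i)\<^sup>2)"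
  have Vpos: "V > 0"
  proof -
    obtain a where a: "a < n" "v $ a \<noteq> 0" using v(1,2) by (metis carrier_vecD eq_vecI index_zero_vec(1,2))
    have "(v $ a)\<^sup>2 \<le> V" unfolding V_def using a by (intro member_le_sum) auto
    moreover have "(v $ a)\<^sup>2 > 0" using a by simp
    ultimately show ?thesis by linarith
  qed
  have Qv: "(\<Sum>j<n. Q $$ (i,j) * v $ j) = e * v $ i" if "i < n" for i
  proof -
    have "(Q *\<^sub>v v) $ i = e * v $ i" using v(1,3) that by simp
    then show ?thesis using Qc v(1) that by (simp add: scalar_prod_def atLeast0LessThan)
  qed
  define y where "y l = (\<Sum>i<n. IB $$ (l,i) * v $ i)" for l
  have quad: "e * V = (\<Sum>l<n. (y l)\<^sup>2 / f l)"
  proof -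
    have "e * V = (\<Sum>i<n. v $ i * (\<Sum>j<n. Q $$ (i,j) * v $ j))"
    proof -
      have "(\<Sum>i<n. v $ i * (\<Sum>j<n. Q $$ (i,j) * v $ j)) = (\<Sum>i<n. e * (v $ i)\<^sup>2)"
        by (rule sum.cong) (simp_all add: Qv power2_eq_square)
      then show ?thesis unfolding V_def by (simp add: sum_distrib_left)
    qed
    also have "\<dots> = (\<Sum>i<n. \<Sum>j<n. \<Sum>l<n. v $ i * v $ j * (IB $$ (l,i) * IB $$ (l,j) / f l))"
      by (simp add: Qij sum_distrib_left mult_ac)
    also have "\<dots> = (\<Sum>i<n. \<Sum>l<n. \<Sum>j<n. v $ i * v $ j * (IB $$ (l,i) * IB $$ (l,j) / f l))"
      by (rule sum.cong[OF refl], rule sum.swap)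
    also have "\<dots> = (\<Sum>l<n. \<Sum>i<n. \<Sum>j<n. v $ i * v $ j * (IB $$ (l,i) * IB $$ (l,j) / f l))"
      by (rule sum.swap)
    also have "\<dots> = (\<Sum>l<n. (y l)\<^sup>2 / f l)"
      by (rule sum.cong[OF refl]) (simp add: y_def power2_eq_square sum_product sum_divide_distrib mult_ac)
    finally show ?thesis .
  qed
  have ybound: "(y l)\<^sup>2 \<le> (real m + 1) * (1 + Wb) * ((v $ l)\<^sup>2 + (\<Sum>i\<in>N l. (v $ i)\<^sup>2))" if l: "l < n" for l
  proof -
    define T where "T = insert l (N l)"
    have NT: "N l \<subseteq> {..<l}" using Nk[OF l] .
    have lN: "l \<notin> N l" using NT by auto
    have finN: "finite (N l)" using NT finite_subset by blast
    have Tsub: "T \<subseteq> {..<n}" unfolding T_def using NT l by auto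
    have finT: "finite T" unfolding T_def using finN by simp
    have "y l = (\<Sum>i\<in>T. IB $$ (l,i) * v $ i)"
      unfolding y_def
    proof (rule sum.mono_neutral_right)
      show "finite {..<n}" by simp
      show "T \<subseteq> {..<n}" by (rule Tsub)
      show "\<forall>i\<in>{..<n} - T. IB $$ (l, i) * v $ i = 0"
        using l Bij[OF l] by (auto simp: T_def IBij)
    qed
    then have "(y l)\<^sup>2 \<le> (\<Sum>i\<in>T. (IB $$ (l,i) * v $ i)\<^sup>2) * card T"
      using sum_squared_le_sum_of_squares by simp
    also have "\<dots> \<le> (\<Sum>i\<in>T. (1 + Wb) * (v $ i)\<^sup>2) * (real m + 1)"
    proof (rule mult_mono)
      show "(\<Sum>i\<in>T. (IB $$ (l,i) * v $ i)\<^sup>2) \<le> (\<Sum>i\<in>T. (1 + Wb) * (v $ i)\<^sup>2)"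
      proof (rule sum_mono)
        fix i assume i: "i \<in> T"
        then have iN: "i < n" using Tsub by auto
        have "(IB $$ (l,i))\<^sup>2 \<le> 1 + Wb"
        proof (cases "i = l")
          case True
          then have "B $$ (l,i) = 0" using Bij[OF l iN] lN by simp
          then show ?thesis using True IBij[OF l iN] Wb0 by simp
        next
          case False
          then show ?thesis using IBij[OF l iN] Bsq[OF l iN] unfolding B_def by simp
        qed
        then show "(IB $$ (l,i) * v $ i)\<^sup>2 \<le> (1 + Wb) * (v $ i)\<^sup>2"
          unfolding power_mult_distrib by (intro mult_right_mono) auto
      qed
      have "card T \<le> card (N l) + 1" unfolding T_def using finN by (simp add: card_insert_if)
      then show "real (card T) \<le> real m + 1" using cardN[OF l] by linarith
      show "0 \<le> (\<Sum>i\<in>T. (1 + Wb) * (v $ i)\<^sup>2)" using Wb0 by (intro sum_nonneg) auto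
    qed simp
    also have "\<dots> = (real m + 1) * (1 + Wb) * ((v $ l)\<^sup>2 + (\<Sum>i\<in>N l. (v $ i)\<^sup>2))"
    proof -
      have "(\<Sum>i\<in>T. (1 + Wb) * (v $ i)\<^sup>2) = (1 + Wb) * (\<Sum>i\<in>T. (v $ i)\<^sup>2)"
        by (rule sum_distrib_left[symmetric])
      also have "(\<Sum>i\<in>T. (v $ i)\<^sup>2) = (v $ l)\<^sup>2 + (\<Sum>i\<in>N l. (v $ i)\<^sup>2)"
        unfolding T_def using finN lN by simp
      finally show ?thesis by (simp only: mult_ac)
    qed
    finally show ?thesis .
  qed
  have dc: "(\<Sum>l<n. \<Sum>i\<in>N l. (v $ i)\<^sup>2) \<le> real M * V"
  proof -
    have "(\<Sum>l<n. \<Sum>i\<in>N l. (v $ i)\<^sup>2) = (\<Sum>l<n. \<Sum>i<n. if i \<in> N l then (v $ i)\<^sup>2 else 0)"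
    proof (rule sum.cong[OF refl])
      fix l assume "l \<in> {..<n}"
      then have NT: "N l \<subseteq> {..<n}" using Nk by fastforce
      then have eqN: "N l = {i \<in> {..<n}. i \<in> N l}" by auto
      have "(\<Sum>i\<in>{i \<in> {..<n}. i \<in> N l}. (v $ i)\<^sup>2) = (\<Sum>i<n. if i \<in> N l then (v $ i)\<^sup>2 else 0)"
        by (rule sum.inter_filter) simp
      then show "(\<Sum>i\<in>N l. (v $ i)\<^sup>2) = (\<Sum>i<n. if i \<in> N l then (v $ i)\<^sup>2 else 0)"
        using eqN by simp
    qed
    also have "\<dots> = (\<Sum>i<n. \<Sum>l<n. if i \<in> N l then (v $ i)\<^sup>2 else 0)" by (rule sum.swap)
    also have "\<dots> = (\<Sum>i<n. real (card {l. l < n \<and> i \<in> N l}) * (v $ i)\<^sup>2)"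
    proof (rule sum.cong[OF refl])
      fix i
      have eqset: "{l \<in> {..<n}. i \<in> N l} = {l. l < n \<and> i \<in> N l}" by auto
      have "(\<Sum>l<n. if i \<in> N l then (v $ i)\<^sup>2 else 0) = (\<Sum>l\<in>{l \<in> {..<n}. i \<in> N l}. (v $ i)\<^sup>2)"
        by (rule sum.inter_filter[symmetric]) simp
      then show "(\<Sum>l<n. if i \<in> N l then (v $ i)\<^sup>2 else 0) = real (card {l. l < n \<and> i \<in> N l}) * (v $ i)\<^sup>2"
        unfolding eqset by simp
    qed
    also have "\<dots> \<le> (\<Sum>i<n. real M * (v $ i)\<^sup>2)"
      by (intro sum_mono mult_right_mono) (use MM in auto)
    also have "\<dots> = real M * V" unfolding V_def by (simp add: sum_distrib_left)
    finally show ?thesis .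
  qed
  define K where "K = (real m + 1) * (1 + Wb)"
  have K0: "K \<ge> 0" unfolding K_def using Wb0 by simp
  have "e * V \<le> (\<Sum>l<n. (y l)\<^sup>2 / c0)"
    unfolding quad
  proof (rule sum_mono)
    fix l assume "l \<in> {..<n}"
    then have "c0 \<le> f l" using Fpos unfolding f_def by auto
    then show "(y l)\<^sup>2 / f l \<le> (y l)\<^sup>2 / c0" using c0 by (intro divide_left_mono) auto
  qed
  also have "\<dots> = (\<Sum>l<n. (y l)\<^sup>2) / c0" by (simp add: sum_divide_distrib)
  also have "\<dots> \<le> (\<Sum>l<n. K * ((v $ l)\<^sup>2 + (\<Sum>i\<in>N l. (v $ i)\<^sup>2))) / c0"
    using c0 ybound unfolding K_def by (intro divide_right_mono sum_mono) auto
  also have "\<dots> = K * (V + (\<Sum>l<n. \<Sum>i\<in>N l. (v $ i)\<^sup>2)) / c0"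
    unfolding V_def by (simp only: sum_distrib_left[symmetric] sum.distrib)
  also have "\<dots> \<le> K * (V + real M * V) / c0"
    using dc K0 c0 by (intro divide_right_mono mult_left_mono) auto
  also have "\<dots> = ((real m + 1) * (1 + Wb) * (1 + real M) / c0) * V"
    unfolding K_def using c0 by (simp add: field_simps)
  finally have le: "e * V \<le> ((real m + 1) * (1 + Wb) * (1 + real M) / c0) * V" .
  show ?thesis by (rule mult_right_le_imp_le[OF le Vpos])
qed


lemma Sigma_bar_carrier: "Sigma_bar \<sigma>2 \<phi> \<nu> \<tau>2 n s \<in> carrier_mat n n"
  unfolding Sigma_bar_def by simp

lemma Sigma_bar_index: "i < n \<Longrightarrow> j < n \<Longrightarrow> Sigma_bar \<sigma>2 \<phi> \<nu> \<tau>2 n s $$ (i,j) =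
   matern \<sigma>2 \<phi> \<nu> (dist (s i) (s j)) + (if i = j then \<tau>2 else 0)"
  unfolding Sigma_bar_def by simp

theorem lemmaS5:
  fixes h \<sigma>2 \<phi> \<nu> \<tau>2 :: real and m M :: nat
  assumes "h > 0" "\<sigma>2 > 0" "\<phi> > 0" "\<nu> > 0" "\<tau>2 \<ge> 0"
  shows "\<exists>K::real. \<forall>(n::nat) (s::nat \<Rightarrow> real^2) (N::nat \<Rightarrow> nat set).
     (\<forall>i<n. \<forall>j<n. i \<noteq> j \<longrightarrow> dist (s i) (s j) \<ge> h) \<and>
     (\<forall>i<n. N i \<subseteq> {..<i} \<and> card (N i) = min m i \<and>
        (\<forall>j\<in>N i. \<forall>k<i. k \<notin> N i \<longrightarrow> dist (s j) (s i) \<le> dist (s k) (s i))) \<and>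
     (\<forall>j<n. card {i. i < n \<and> j \<in> N i} \<le> M)
     \<longrightarrow> (\<forall>ev. eigenvalue (nngp_Q (Sigma_bar \<sigma>2 \<phi> \<nu> \<tau>2 n s) N) ev \<longrightarrow> ev \<le> K)"
proof -
  obtain c0 where c0: "c0 > 0" and pd: "\<And>q (t::nat \<Rightarrow> real^2) (x::nat \<Rightarrow> real). q \<le> m + 1 \<Longrightarrow>
           (\<forall>a<q. \<forall>b<q. a \<noteq> b \<longrightarrow> h \<le> dist (t a) (t b)) \<Longrightarrow>
           c0 * (\<Sum>a<q. (x a)\<^sup>2) \<le> (\<Sum>a<q. \<Sum>b<q. x a * x b * matern \<sigma>2 \<phi> \<nu> (dist (t a) (t b)))"
    using matern_pd[OF assms(1-4), of m] by blast
  define Wb where "Wb = (\<sigma>2 + \<tau>2) / c0"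
  have Wb0: "Wb \<ge> 0" unfolding Wb_def using c0 assms by simp
  show ?thesis
  proof (rule exI[of _ "(real m + 1) * (1 + Wb) * (1 + real M) / c0"], intro allI impI)
    fix n s N ev
    assume H: "(\<forall>i<n. \<forall>j<n. i \<noteq> j \<longrightarrow> dist (s i) (s j) \<ge> h) \<and>
     (\<forall>i<n. N i \<subseteq> {..<i} \<and> card (N i) = min m i \<and>
        (\<forall>j\<in>N i. \<forall>k<i. k \<notin> N i \<longrightarrow> dist (s j) (s i) \<le> dist (s k) (s i))) \<and>
     (\<forall>j<n. card {i. i < n \<and> j \<in> N i} \<le> M)"
      and ev: "eigenvalue (nngp_Q (Sigma_bar \<sigma>2 \<phi> \<nu> \<tau>2 n s) N) ev"
    define S where "S = Sigma_bar \<sigma>2 \<phi> \<nu> \<tau>2 n s"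
    have S: "S \<in> carrier_mat n n" unfolding S_def by (rule Sigma_bar_carrier)
    have Sij: "S $$ (i,j) = matern \<sigma>2 \<phi> \<nu> (dist (s i) (s j)) + (if i = j then \<tau>2 else 0)"
      if "i < n" "j < n" for i j unfolding S_def using that by (rule Sigma_bar_index)
    have sym: "S $$ (i,j) = S $$ (j,i)" if "i < n" "j < n" for i j
      using that by (simp add: Sij dist_commute)
    have Nk: "N k \<subseteq> {..<k}" if "k < n" for k using H that by blast
    have cardN: "card (N k) \<le> m" if "k < n" for k using H that by simp
    have MM: "card {i. i < n \<and> j \<in> N i} \<le> M" if "j < n" for j using H that by blast
    have PD: "c0 * (\<Sum>a<q. (x a)\<^sup>2) \<le> (\<Sum>a<q. \<Sum>b<q. x a * x b * S $$ (idx a, idx b))"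
      if q: "q \<le> m + 1" and inj: "inj_on idx {..<q}" and img: "idx ` {..<q} \<subseteq> {..<n}" for q idx x
    proof -
      have idxn: "idx a < n" if "a < q" for a using img that by auto
      have "c0 * (\<Sum>a<q. (x a)\<^sup>2) \<le> (\<Sum>a<q. \<Sum>b<q. x a * x b * matern \<sigma>2 \<phi> \<nu> (dist ((s \<circ> idx) a) ((s \<circ> idx) b)))"
      proof (rule pd[OF q])
        show "\<forall>a<q. \<forall>b<q. a \<noteq> b \<longrightarrow> h \<le> dist ((s \<circ> idx) a) ((s \<circ> idx) b)"
        proof (intro allI impI)
          fix a b assume ab: "a < q" "b < q" "a \<noteq> b"
          then have "idx a \<noteq> idx b" using inj by (auto simp: inj_on_def)
          then show "h \<le> dist ((s \<circ> idx) a) ((s \<circ> idx) b)" using H idxn ab by auto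
        qed
      qed
      also have "\<dots> \<le> (\<Sum>a<q. \<Sum>b<q. x a * x b * S $$ (idx a, idx b))"
      proof -
        have e: "(\<Sum>a<q. \<Sum>b<q. x a * x b * S $$ (idx a, idx b))
          = (\<Sum>a<q. \<Sum>b<q. x a * x b * matern \<sigma>2 \<phi> \<nu> (dist ((s \<circ> idx) a) ((s \<circ> idx) b)))
            + (\<Sum>a<q. \<Sum>b<q. if a = b then \<tau>2 * (x a)\<^sup>2 else 0)"
        proof -
          have "x a * x b * S $$ (idx a, idx b) = x a * x b * matern \<sigma>2 \<phi> \<nu> (dist ((s \<circ> idx) a) ((s \<circ> idx) b))
            + (if a = b then \<tau>2 * (x a)\<^sup>2 else 0)" if "a < q" "b < q" for a b
          proof -
            have "(idx a = idx b) = (a = b)" using inj that by (auto simp: inj_on_def)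
            then show ?thesis using Sij[OF idxn[OF that(1)] idxn[OF that(2)]]
              by (simp add: power2_eq_square algebra_simps)
          qed
          then show ?thesis by (simp add: sum.distrib)
        qed
        have "0 \<le> (\<Sum>a<q. \<Sum>b<q. if a = b then \<tau>2 * (x a)\<^sup>2 else 0)"
          using assms(5) by (intro sum_nonneg) auto
        then show ?thesis unfolding e by linarith
      qed
      finally show ?thesis .
    qed
    have loc: "c0 * (1 + (\<Sum>a<card (N k). (nngp_w S N k $$ (0,a))\<^sup>2)) \<le> nngp_F_entry S N k
         \<and> nngp_F_entry S N k \<le> S $$ (k,k)" if k: "k < n" for k
      by (rule nngp_local[where S=S and n=n and m=m and k=k and N=N, OF S sym PD c0 k Nk[OF k] cardN[OF k]])
    have Skk: "S $$ (k,k) = \<sigma>2 + \<tau>2" if "k < n" for k using Sij[OF that that] by (simp add: matern_def)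
    have Fpos: "c0 \<le> nngp_F_entry S N k" if k: "k < n" for k
    proof -
      have "0 \<le> c0 * (\<Sum>a<card (N k). (nngp_w S N k $$ (0,a))\<^sup>2)" using c0 by (simp add: sum_nonneg)
      then show ?thesis using loc[OF k] by (simp add: distrib_left)
    qed
    have Bsq: "(nngp_B S N $$ (k,j))\<^sup>2 \<le> Wb" if k: "k < n" and j: "j < n" for k j
    proof (cases "j \<in> N k")
      case False
      then show ?thesis using k j Wb0 S by (simp add: nngp_B_def)
    next
      case True
      define pos where "pos = card {i \<in> N k. i < j}"
      have finN: "finite (N k)" using Nk[OF k] finite_subset by blast
      have pos: "pos < card (N k)" unfolding pos_def
        by (rule psubset_card_mono[OF finN]) (use True in auto)
      have Bv: "nngp_B S N $$ (k,j) = nngp_w S N k $$ (0,pos)"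
        using k j True S by (simp add: nngp_B_def pos_def)
      have "(nngp_w S N k $$ (0,pos))\<^sup>2 \<le> (\<Sum>a<card (N k). (nngp_w S N k $$ (0,a))\<^sup>2)"
        using pos by (intro member_le_sum) auto
      also have "\<dots> \<le> Wb"
      proof -
        have "c0 * (1 + (\<Sum>a<card (N k). (nngp_w S N k $$ (0,a))\<^sup>2)) \<le> \<sigma>2 + \<tau>2"
          using loc[OF k] Skk[OF k] by linarith
        then have "c0 * (\<Sum>a<card (N k). (nngp_w S N k $$ (0,a))\<^sup>2) \<le> \<sigma>2 + \<tau>2"
          using c0 by (simp add: distrib_left)
        then show ?thesis unfolding Wb_def using c0 by (simp add: field_simps)
      qed
      finally show ?thesis unfolding Bv .
    qed
    show "ev \<le> (real m + 1) * (1 + Wb) * (1 + real M) / c0"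
      by (rule nngp_global[OF S c0 Fpos Bsq Wb0 Nk cardN MM ev[folded S_def]])
  qed
qed

end
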